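(* Let $D,\chi,\varepsilon>0$, $a\ge 0$, $\beta>0$, $b=D\beta^2$. Then there is no $r_0>0$ and no pair of functions $\rho\in C^0[0,\infty)$, $\phi\in C^2[0,\infty)$ with $\rho\ge 0$, $\phi(0)\ge 0$, such that $\rho(0)=0$, $\rho>0$ on $(0,r_0)$, $\rho\equiv0$ on $[r_0,\infty)$, $\rho$ is differentiable on $(0,r_0)$ with $\varepsilon\rho\rho_r=\chi\rho\phi_r$ there, and $D\phi_{rr}+D\frac{\phi_r}{r}+a\rho-b\phi=0$ on $(0,\infty)$. (That is, there is no single whole bump solution touching $r=0$.)
   Context: The system $\partial_r(\frac{\varepsilon}{2}\rho^2)=\chi\rho\phi_r$, $D\phi_{rr}+D\phi_r/r+a\rho-b\phi=0$ is the radially symmetric stationary form of a hyperbolic-parabolic chemotaxis model on $\mathbb{R}^2$ with pressure $p(\rho)=\frac{\varepsilon}{2}\rho^2$; $r=|x|$. *)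

theory Defs
  imports "HOL-Analysis.Analysis"
begin

definition C2_halfline :: "(real \<Rightarrow> real) \<Rightarrow> (real \<Rightarrow> real) \<Rightarrow> (real \<Rightarrow> real) \<Rightarrow> bool" where
  "C2_halfline phi phi1 phi2 \<longleftrightarrow>
     (\<forall>r\<ge>0. (phi has_real_derivative phi1 r) (at r within {0..})) \<and>
     (\<forall>r\<ge>0. (phi1 has_real_derivative phi2 r) (at r within {0..})) \<and>
     continuous_on {0..} phi2"

end

theory Submission
  imports Defs
begin

lemma interior_halfline: "interior {0::real..} = {0<..}"
  using interior_Ici[of "-1::real" 0] by simp

lemma at_pos: "(x::real) > 0 \<Longrightarrow> at x within {0..} = at x"
  by (rule at_within_interior) (simp add: interior_halfline)

theorem mainTheorem3:
  fixes D chi eps a beta b :: real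
  assumes "D > 0" and "chi > 0" and "eps > 0" and "a \<ge> 0" and "beta > 0"
    and "b = D * beta\<^sup>2"
  shows "\<not> (\<exists>r0 > 0. \<exists>rho phi phi1 phi2 :: real \<Rightarrow> real.
            continuous_on {0..} rho \<and> C2_halfline phi phi1 phi2 \<and>
            (\<forall>r\<ge>0. rho r \<ge> 0) \<and> phi 0 \<ge> 0 \<and>
            rho 0 = 0 \<and>
            (\<forall>r. 0 < r \<and> r < r0 \<longrightarrow> rho r > 0) \<and>
            (\<forall>r\<ge>r0. rho r = 0) \<and>
            (\<forall>r. 0 < r \<and> r < r0 \<longrightarrow>
               (\<exists>rho'. (rho has_real_derivative rho') (at r) \<and>
                       eps * rho r * rho' = chi * rho r * phi1 r)) \<and>
            (\<forall>r>0. D * phi2 r + D * phi1 r / r + a * rho r - b * phi r = 0))"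
proof
  assume "\<exists>r0 > 0. \<exists>rho phi phi1 phi2 :: real \<Rightarrow> real.
            continuous_on {0..} rho \<and> C2_halfline phi phi1 phi2 \<and>
            (\<forall>r\<ge>0. rho r \<ge> 0) \<and> phi 0 \<ge> 0 \<and>
            rho 0 = 0 \<and>
            (\<forall>r. 0 < r \<and> r < r0 \<longrightarrow> rho r > 0) \<and>
            (\<forall>r\<ge>r0. rho r = 0) \<and>
            (\<forall>r. 0 < r \<and> r < r0 \<longrightarrow>
               (\<exists>rho'. (rho has_real_derivative rho') (at r) \<and>
                       eps * rho r * rho' = chi * rho r * phi1 r)) \<and>
            (\<forall>r>0. D * phi2 r + D * phi1 r / r + a * rho r - b * phi r = 0)"
  then obtain r0 rho phi phi1 phi2 where r0: "r0 > 0"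
    and crho: "continuous_on {0..} rho" and C2: "C2_halfline phi phi1 phi2"
    and rnn: "\<forall>r\<ge>0. rho r \<ge> 0" and p0: "phi 0 \<ge> 0" and rho0: "rho 0 = 0"
    and rpos: "\<forall>r. 0 < r \<and> r < r0 \<longrightarrow> rho r > 0"
    and rz: "\<forall>r\<ge>r0. rho r = 0"
    and rd: "\<forall>r. 0 < r \<and> r < r0 \<longrightarrow>
               (\<exists>rho'. (rho has_real_derivative rho') (at r) \<and>
                       eps * rho r * rho' = chi * rho r * phi1 r)"
    and ode: "\<forall>r>0. D * phi2 r + D * phi1 r / r + a * rho r - b * phi r = 0"
    by blast
  have d1: "\<And>r. r \<ge> 0 \<Longrightarrow> (phi has_real_derivative phi1 r) (at r within {0..})"
    and d2: "\<And>r. r \<ge> 0 \<Longrightarrow> (phi1 has_real_derivative phi2 r) (at r within {0..})"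
    and c2: "continuous_on {0..} phi2"
    using C2 unfolding C2_halfline_def by auto
  have cphi: "continuous_on {0..} phi" by (rule DERIV_continuous_on[OF d1]) simp
  have cphi1: "continuous_on {0..} phi1" by (rule DERIV_continuous_on[OF d2]) simp
  have da1: "\<And>r. r > 0 \<Longrightarrow> (phi has_real_derivative phi1 r) (at r)"
    using d1 at_pos by (metis less_imp_le)
  have da2: "\<And>r. r > 0 \<Longrightarrow> (phi1 has_real_derivative phi2 r) (at r)"
    using d2 at_pos by (metis less_imp_le)
  have A: "eps * rho r - chi * phi r = - chi * phi 0" if "0 \<le> r" "r \<le> r0" for r
  proof (cases "r = 0")
    case True then show ?thesis using rho0 by simp
  next
    case False
    define g where "g = (\<lambda>x. eps * rho x - chi * phi x)"
    have cg: "continuous_on {0..r} g" unfolding g_def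
      by (intro continuous_intros continuous_on_subset[OF crho] continuous_on_subset[OF cphi]) auto
    have dg: "(g has_real_derivative 0) (at x)" if "0 < x" "x < r" for x
    proof -
      obtain rho' where h: "(rho has_real_derivative rho') (at x)"
        "eps * rho x * rho' = chi * rho x * phi1 x"
        using rd \<open>0 < x\<close> \<open>x < r\<close> \<open>r \<le> r0\<close> by fastforce
      have "rho x > 0" using rpos that \<open>r \<le> r0\<close> by auto
      then have e: "eps * rho' = chi * phi1 x" using h(2) by simp
      have "(g has_real_derivative eps * rho' - chi * phi1 x) (at x)" unfolding g_def
        using DERIV_diff[OF DERIV_cmult[OF h(1), of eps] DERIV_cmult[OF da1[of x], of chi]] that by simp
      then show ?thesis using e by simp
    qed
    have "g 0 \<le> g r"
      by (rule DERIV_nonneg_imp_increasing_open[OF that(1) _ cg]) (use dg in auto)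
    moreover have "g 0 \<ge> g r"
      by (rule DERIV_nonpos_imp_decreasing_open[OF that(1) _ cg]) (use dg in auto)
    ultimately show ?thesis unfolding g_def using rho0 by simp
  qed
  have phir0: "phi r0 = phi 0" using A[of r0] rz r0 \<open>chi > 0\<close> by simp
  have rhoeq: "rho r = chi / eps * (phi r - phi 0)" if "0 \<le> r" "r \<le> r0" for r
    using A[OF that] \<open>eps > 0\<close> by (simp add: field_simps)
  have phigt: "phi r > phi 0" if "0 < r" "r < r0" for r
  proof -
    have "rho r > 0" using rpos that by auto
    then show ?thesis using rhoeq[of r] that \<open>chi > 0\<close> \<open>eps > 0\<close>
      by (simp add: zero_less_mult_iff zero_less_divide_iff)
  qed
  have B: "phi1 0 = 0"
  proof -
    define h where "h = (\<lambda>r. D * r * phi2 r + D * phi1 r + a * r * rho r - b * r * phi r)"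
    have ch: "continuous_on (closure {0<..}) h" unfolding h_def
      by (simp, intro continuous_intros c2 cphi1 crho cphi)
    have "h r = 0" if "r \<in> {0<..}" for r
    proof -
      have "r > 0" using that by simp
      from ode[rule_format, OF this] have "r * (D * phi2 r + D * phi1 r / r + a * rho r - b * phi r) = 0"
        by simp
      then show ?thesis unfolding h_def using \<open>r > 0\<close> by (simp add: algebra_simps)
    qed
    from continuous_constant_on_closure[OF ch this] have "h 0 = 0" by simp
    then show ?thesis unfolding h_def using \<open>D > 0\<close> by simp
  qed
  define k where "k = chi / eps"
  define c where "c = a * k - b"
  have ode2: "D * phi2 r + D * phi1 r / r + c * phi r - a * k * phi 0 = 0"
    if "0 < r" "r < r0" for r
    using ode[rule_format, of r] rhoeq[of r] that unfolding c_def k_def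
    by (simp add: algebra_simps)
  have bnn: "b \<ge> 0" using assms by simp
  have "r0 / 2 > 0" "r0 / 2 < r0" using r0 by auto
  show False
  proof (cases "c \<le> 0")
    case True
    have p1: "phi1 s \<ge> 0" if "0 < s" "s < r0" for s
    proof -
      define w where "w = (\<lambda>r. r * phi1 r)"
      have cw: "continuous_on {0..s} w" unfolding w_def
        by (intro continuous_intros continuous_on_subset[OF cphi1]) auto
      have "w 0 \<le> w s"
      proof (rule DERIV_nonneg_imp_increasing_open[OF _ _ cw])
        show "0 \<le> s" using that by simp
        fix x assume x: "0 < x" "x < s"
        have der: "(w has_real_derivative 1 * phi1 x + x * phi2 x) (at x)" unfolding w_def
          using DERIV_mult[OF DERIV_ident da2[of x]] x by (simp add: mult.commute)
        have e: "1 * phi1 x + x * phi2 x = x * (b * phi 0 - c * (phi x - phi 0)) / D"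
        proof -
          have "D * phi2 x + D * phi1 x / x + c * phi x - a * k * phi 0 = 0"
            using ode2[of x] x that by simp
          then have "x * (D * phi2 x + D * phi1 x / x + c * phi x - a * k * phi 0) = 0" by simp
          then have "D * (x * phi2 x) + D * phi1 x + x * c * phi x - x * a * k * phi 0 = 0"
            using x by (simp add: algebra_simps)
          then show ?thesis using \<open>D > 0\<close> unfolding c_def by (simp add: field_simps)
        qed
        have "phi x - phi 0 > 0" using phigt[of x] x that by simp
        then have "- c * (phi x - phi 0) \<ge> 0" using True by (simp add: mult_nonpos_nonneg)
        then have "b * phi 0 - c * (phi x - phi 0) \<ge> 0" using mult_nonneg_nonneg[OF bnn p0] by linarith
        then have "x * (b * phi 0 - c * (phi x - phi 0)) / D \<ge> 0" using x \<open>D > 0\<close> by simp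
        then show "\<exists>y. (w has_real_derivative y) (at x) \<and> 0 \<le> y" using der e by metis
      qed
      then show ?thesis unfolding w_def using that by (simp add: zero_le_mult_iff)
    qed
    have cp: "continuous_on {r0/2..r0} phi" by (rule continuous_on_subset[OF cphi]) (use r0 in auto)
    have "phi (r0/2) \<le> phi r0"
    proof (rule DERIV_nonneg_imp_increasing_open[OF _ _ cp])
      show "r0/2 \<le> r0" using r0 by simp
      fix x assume x: "r0/2 < x" "x < r0"
      then have "0 < x" using r0 by linarith
      show "\<exists>y. DERIV phi x :> y \<and> 0 \<le> y" using da1[OF \<open>0<x\<close>] p1[OF \<open>0<x\<close> x(2)] by blast
    qed
    then show False using phigt[of "r0/2"] phir0 r0 by simp
  next
    case False
    then have cpos: "c > 0" by simp
    define p where "p = a * k * phi 0 / c"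
    define E where "E = (\<lambda>r. D * (phi1 r)\<^sup>2 / 2 + c * (phi r - p)\<^sup>2 / 2)"
    have cE: "continuous_on {s..t} E" if "0 \<le> s" for s t unfolding E_def
      by (intro continuous_intros continuous_on_subset[OF cphi1] continuous_on_subset[OF cphi])
         (use that in auto)
    have dE: "(E has_real_derivative - D * (phi1 x)\<^sup>2 / x) (at x)" if "0 < x" "x < r0" for x
    proof -
      have a2: "(phi1 has_real_derivative phi2 x) (at x)" using da2 that by simp
      have a1: "((\<lambda>r. phi r - p) has_real_derivative phi1 x - 0) (at x)"
        using DERIV_diff[OF da1[of x] DERIV_const[of p]] that by simp
      have h1: "((\<lambda>r. phi1 r * phi1 r) has_real_derivative phi2 x * phi1 x + phi2 x * phi1 x) (at x)"
        by (rule DERIV_mult[OF a2 a2])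
      have h2: "((\<lambda>r. (phi r - p) * (phi r - p)) has_real_derivative (phi1 x - 0) * (phi x - p) + (phi1 x - 0) * (phi x - p)) (at x)"
        by (rule DERIV_mult[OF a1 a1])
      have der0: "((\<lambda>r. D * (phi1 r * phi1 r) / 2 + c * ((phi r - p) * (phi r - p)) / 2) has_real_derivative
          D * (phi2 x * phi1 x + phi2 x * phi1 x) / 2 + c * ((phi1 x - 0) * (phi x - p) + (phi1 x - 0) * (phi x - p)) / 2) (at x)"
        by (rule DERIV_add[OF DERIV_cdivide[OF DERIV_cmult[OF h1]] DERIV_cdivide[OF DERIV_cmult[OF h2]]])
      have der: "(E has_real_derivative D * (2 * phi1 x * phi2 x) / 2 + c * (2 * (phi x - p) * phi1 x) / 2) (at x)"
        unfolding E_def power2_eq_square using der0 by (simp add: algebra_simps)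
      have "D * phi2 x = - D * phi1 x / x - c * phi x + c * p"
        using ode2[OF that] cpos unfolding p_def by (simp add: field_simps)
      note e = this
      have "D * (2 * phi1 x * phi2 x) / 2 + c * (2 * (phi x - p) * phi1 x) / 2
          = phi1 x * (D * phi2 x) + c * (phi x - p) * phi1 x"
        by (simp add: field_simps)
      also have "\<dots> = phi1 x * (- D * phi1 x / x - c * phi x + c * p) + c * (phi x - p) * phi1 x"
        by (simp only: e)
      also have "\<dots> = - D * (phi1 x)\<^sup>2 / x" by (simp add: algebra_simps power2_eq_square)
      finally show ?thesis using der by simp
    qed
    have dEn: "\<exists>y. (E has_real_derivative y) (at x) \<and> y \<le> 0" if "0 < x" "x < r0" for x
      using dE[OF that] that \<open>D > 0\<close> by (intro exI[of _ "- D * (phi1 x)\<^sup>2 / x"]) auto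
    have E0: "E 0 \<le> E r0" unfolding E_def using B phir0 \<open>D > 0\<close> by simp
    have Econst: "E s = E 0" if "0 \<le> s" "s \<le> r0" for s
    proof -
      have "E 0 \<ge> E s"
        by (rule DERIV_nonpos_imp_decreasing_open[OF that(1) _ cE]) (use dEn that in auto)
      moreover have "E s \<ge> E r0"
        by (rule DERIV_nonpos_imp_decreasing_open[OF that(2) _ cE[OF that(1)]]) (use dEn that in auto)
      ultimately show ?thesis using E0 by simp
    qed
    have p1z: "phi1 x = 0" if "0 < x" "x < r0" for x
    proof -
      have "- D * (phi1 x)\<^sup>2 / x = 0"
      proof (rule DERIV_local_const[OF dE[OF that]])
        show "0 < min x (r0 - x)" using that by simp
        show "\<forall>y. \<bar>x - y\<bar> < min x (r0 - x) \<longrightarrow> E x = E y"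
        proof (intro allI impI)
          fix y assume "\<bar>x - y\<bar> < min x (r0 - x)"
          then have "0 \<le> y" "y \<le> r0" by (auto simp: abs_less_iff)
          then show "E x = E y" using Econst[of x] Econst[of y] that by simp
        qed
      qed
      then show ?thesis using that \<open>D > 0\<close> by simp
    qed
    have cp: "continuous_on {0..r0/2} phi" by (rule continuous_on_subset[OF cphi]) auto
    have "phi (r0/2) \<le> phi 0"
    proof (rule DERIV_nonpos_imp_decreasing_open[OF _ _ cp])
      show "0 \<le> r0/2" using r0 by simp
      fix x assume x: "0 < x" "x < r0/2"
      then have "x < r0" using r0 by linarith
      show "\<exists>y. DERIV phi x :> y \<and> y \<le> 0" using da1[OF x(1)] p1z[OF x(1) \<open>x<r0\<close>] by auto
    qed
    then show False using phigt[of "r0/2"] r0 by simp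
  qed
qed

end
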